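(* Let $K$ be a field of characteristic zero. For each integer $n\ge1$ let $T_n\in\mathbb{Z}[x]$ be the polynomial of degree $n$ such that $\mathrm{trace}(\sigma^{(n)}(s))=T_n(\mathrm{trace}(s))$ for all $s\in SL_2(K)$, where $\sigma^{(n)}$ is the $n$-th symmetric power of the standard representation of $SL_2(K)$. Let $n_1,\dots,n_r$ and $m_1,\dots,m_t$ be positive integers. Suppose there exists an infinite subset $\Sigma\subset SL_2(K)$ whose elements have pairwise distinct traces such that $$\prod_{i=1}^{r}T_{n_i}(\mathrm{trace}(s))=\prod_{j=1}^{t}T_{m_j}(\mathrm{trace}(s))\quad\text{for every } s\in\Sigma.$$ Then $r=t$ and, after reordering, $n_i=m_i$ for all $i$. *)

theory Defs
  imports "HOL-Analysis.Analysis" "HOL-Computational_Algebra.Polynomial"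
begin

definition SL2 :: "('a::field^2^2) set" where
  "SL2 = {A. det A = 1}"

text \<open>The n-th symmetric power of the standard representation: the matrix of the
action of A on homogeneous polynomials of degree n in X, Y (basis X^i Y^(n-i), i=0..n),
where A sends X to A11 X + A21 Y and Y to A12 X + A22 Y.  Dehomogenising (Y = 1), the
image of the basis vector X^k Y^(n-k) is (A11 x + A21)^k (A12 x + A22)^(n-k), and the
(i,k) entry is its coefficient of x^i.\<close>
definition sym_pow_entry :: "nat \<Rightarrow> 'a::field^2^2 \<Rightarrow> nat \<Rightarrow> nat \<Rightarrow> 'a" where
  "sym_pow_entry n A i k =
     coeff ([:A$2$1, A$1$1:] ^ k * [:A$2$2, A$1$2:] ^ (n - k)) i"

definition sym_pow_trace :: "nat \<Rightarrow> 'a::field^2^2 \<Rightarrow> 'a" where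
  "sym_pow_trace n A = (\<Sum>k\<le>n. sym_pow_entry n A k k)"

end

theory Submission
  imports Defs
begin


lemma mpi_add: "map_poly (of_int :: int \<Rightarrow> 'a::comm_ring_1) (p + q) = map_poly of_int p + map_poly of_int q"
  by (rule poly_eqI) (simp add: coeff_map_poly)
lemma mpi_diff: "map_poly (of_int :: int \<Rightarrow> 'a::comm_ring_1) (p - q) = map_poly of_int p - map_poly of_int q"
  by (rule poly_eqI) (simp add: coeff_map_poly)
lemma mpi_mult: "map_poly (of_int :: int \<Rightarrow> 'a::comm_ring_1) (p * q) = map_poly of_int p * map_poly of_int q"
proof (induct p rule: pCons_induct)
  case 0 then show ?case by simp
next
  case (pCons a p)
  then show ?case
    by (simp add: mpi_add map_poly_pCons map_poly_smult algebra_simps)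
qed
lemma mpi_prod_list: "map_poly (of_int :: int \<Rightarrow> 'a::comm_ring_1) (prod_list ps) = prod_list (map (map_poly of_int) ps)"
  by (induct ps) (simp_all add: mpi_mult)

lemma mpi_inj:
  assumes "map_poly (of_int :: int \<Rightarrow> 'a::ring_char_0) p = map_poly of_int q"
  shows "p = q"
proof (rule poly_eqI)
  fix n
  have "coeff (map_poly (of_int :: int \<Rightarrow> 'a) p) n = coeff (map_poly of_int q) n" using assms by simp
  then show "coeff p n = coeff q n" by (simp add: coeff_map_poly)
qed

fun U :: "nat \<Rightarrow> int poly" where
  "U 0 = 1"
| "U (Suc 0) = [:0, 1:]"
| "U (Suc (Suc n)) = [:0, 1:] * U (Suc n) - U n"

lemma U_eval:
  fixes a :: "'a::field"
  assumes "a \<noteq> 0"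
  shows "(a - 1/a) * poly (map_poly of_int (U n)) (a + 1/a) = a^(n+1) - (1/a)^(n+1)"
proof (induct n rule: U.induct)
  case 1 then show ?case by simp
next
  case 2 then show ?case using assms by (simp add: map_poly_pCons field_simps power2_eq_square)
next
  case (3 n)
  define b where "b = 1/a"
  have ab: "a * b = 1" using assms by (simp add: b_def)
  define u1 where "u1 = poly (map_poly of_int (U (Suc n))) (a + b)"
  define u0 where "u0 = poly (map_poly of_int (U n)) (a + b)"
  have h1: "(a - b) * u1 = a^(n+2) - b^(n+2)" using 3(1) by (simp add: u1_def b_def)
  have h0: "(a - b) * u0 = a^(n+1) - b^(n+1)" using 3(2) by (simp add: u0_def b_def)
  have "(a - b) * ((a + b) * u1 - u0) = (a+b) * ((a - b) * u1) - (a - b) * u0"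
    by (simp add: algebra_simps)
  also have "\<dots> = (a+b) * (a^(n+2) - b^(n+2)) - (a^(n+1) - b^(n+1))" using h1 h0 by simp
  also have "\<dots> = a^(n+3) - b^(n+3) + a * b * (a^(n+1) - b^(n+1)) - (a^(n+1) - b^(n+1))"
    by (simp add: algebra_simps power_add eval_nat_numeral)
  also have "\<dots> = a^(n+3) - b^(n+3)" using ab by simp
  finally show ?case
    by (simp add: mpi_diff mpi_mult map_poly_pCons u1_def u0_def b_def[symmetric] Suc3_eq_add_3 add.commute)
qed



definition Dg :: "'a::field \<Rightarrow> 'a^2^2" where
  "Dg a = vector [vector [a, 0], vector [0, 1/a]]"

lemma Dg_SL2: "(a::'a::field) \<noteq> 0 \<Longrightarrow> Dg a \<in> SL2"
  by (simp add: SL2_def Dg_def det_2)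

lemma Dg_trace: "trace (Dg (a::'a::field)) = a + 1/a"
  by (simp add: trace_def Dg_def UNIV_2)

lemma Dg_sym: "sym_pow_trace n (Dg (a::'a::field)) = (\<Sum>k\<le>n. a^k * (1/a)^(n-k))"
proof -
  have "sym_pow_entry n (Dg a) k k = a^k * (1/a)^(n-k)" for k
  proof -
    have e: "[:0, a:] ^ k = monom (a^k) k" 
      by (induct k) (simp_all add: monom_Suc monom_0 smult_monom)
    have f: "[:1/a, 0:] ^ (n-k) = [:(1/a)^(n-k):]"
      by (simp add: pCons_0_0 poly_const_pow)
    show ?thesis unfolding sym_pow_entry_def
      by (simp add: Dg_def e f coeff_monom_mult poly_const_pow)
  qed
  then show ?thesis by (simp add: sym_pow_trace_def)
qed

lemma geom_sum: "(a::'a::field) \<noteq> 0 \<Longrightarrow> (a - 1/a) * (\<Sum>k\<le>n. a^k * (1/a)^(n-k)) = a^(n+1) - (1/a)^(n+1)"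
proof (induct n)
  case 0 then show ?case by simp
next
  case (Suc n)
  have "(\<Sum>k\<le>Suc n. a^k * (1/a)^(Suc n-k)) = (1/a) * (\<Sum>k\<le>n. a^k * (1/a)^(n-k)) + a^(Suc n)"
    by (simp add: sum_distrib_left Suc_diff_le algebra_simps)
  define S where "S = (\<Sum>k\<le>n. a^k * (1/a)^(n-k))"
  define b where "b = 1/a"
  have ab: "a * b = 1" using Suc by (simp add: b_def)
  have IH: "(a - b) * S = a^(n+1) - b^(n+1)" using Suc by (simp add: S_def b_def)
  have "(a - b) * (b * S + a^(Suc n)) = b * ((a - b) * S) + (a - b) * a^(Suc n)"
    by (simp add: algebra_simps)
  also have "\<dots> = b * (a^(n+1) - b^(n+1)) + (a - b) * a^(Suc n)" using IH by simp
  also have "\<dots> = (a*b) * a^n - b^(n+2) + a^(n+2) - (a*b) * a^n"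
    by (simp add: algebra_simps eval_nat_numeral)
  also have "\<dots> = a^(Suc n+1) - b^(Suc n+1)" by simp
  finally show ?case using \<open>(\<Sum>k\<le>Suc n. a^k * (1/a)^(Suc n-k)) = _\<close>
    by (simp add: S_def b_def)
qed



lemma cis_ne1:
  assumes "0 < k" "k < M"
  shows "cis (2 * pi * real k / real M) \<noteq> 1"
proof
  assume "cis (2 * pi * real k / real M) = 1"
  then have "cos (2 * pi * real k / real M) = 1"
    by (metis Re_complex_of_real complex_eq_iff cis.sel(1) one_complex.sel(1))
  then obtain n :: int where n: "2 * pi * real k / real M = real_of_int n * 2 * pi"
    using cos_one_2pi_int by blast
  have M: "real M > 0" using assms by simp
  have "real k = real_of_int n * real M" using n M by (simp add: field_simps)
  then have "int k = n * int M" by (metis of_int_eq_iff of_int_mult of_int_of_nat_eq)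
  show False
  proof (cases "n \<le> 0")
    case True
    then have "n * int M \<le> 0" by (simp add: mult_nonpos_nonneg)
    then show False using \<open>int k = n * int M\<close> assms by simp
  next
    case False
    then have "n * int M \<ge> 1 * int M" by (intro mult_right_mono) auto
    moreover have "int k < int M" using assms by simp
    ultimately show False using \<open>int k = n * int M\<close> by linarith
  qed
qed

lemma cis_pow: "cis x ^ n = cis (real n * x)" by (rule Complex.DeMoivre)



lemma mem_other:
  fixes P :: "nat \<Rightarrow> 'b::idom poly"
  assumes roots: "\<And>N. N \<ge> 1 \<Longrightarrow> \<exists>\<alpha>. poly (P N) \<alpha> = 0 \<and> (\<forall>m. 1 \<le> m \<longrightarrow> m < N \<longrightarrow> poly (P m) \<alpha> \<noteq> 0)"
    and N: "N \<in># A" "N \<ge> 1" and B: "\<forall>x\<in>#B. 1 \<le> x \<and> x \<le> N"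
    and eq: "prod_mset (image_mset P A) = prod_mset (image_mset P B)"
  shows "N \<in># B"
proof -
  obtain \<alpha> where a: "poly (P N) \<alpha> = 0" "\<forall>m. 1 \<le> m \<longrightarrow> m < N \<longrightarrow> poly (P m) \<alpha> \<noteq> 0"
    using roots N(2) by blast
  obtain A' where A: "A = add_mset N A'" using N(1) by (metis mset_add)
  have "poly (prod_mset (image_mset P A)) \<alpha> = 0" using a(1) by (simp add: A)
  then have "poly (prod_mset (image_mset P B)) \<alpha> = 0" using eq by simp
  then have "(\<Prod>x\<in>#B. poly (P x) \<alpha>) = 0" by (simp add: poly_prod_mset)
  then obtain m where m: "m \<in># B" "poly (P m) \<alpha> = 0"
    by (auto simp: prod_mset_zero_iff)
  then have "m = N" using B a(2) by force
  then show ?thesis using m by simp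
qed

lemma mset_eq_from_prod:
  fixes P :: "nat \<Rightarrow> 'b::idom poly"
  assumes roots: "\<And>N. N \<ge> 1 \<Longrightarrow> \<exists>\<alpha>. poly (P N) \<alpha> = 0 \<and> (\<forall>m. 1 \<le> m \<longrightarrow> m < N \<longrightarrow> poly (P m) \<alpha> \<noteq> 0)"
    and nz: "\<And>N. N \<ge> 1 \<Longrightarrow> P N \<noteq> 0"
  shows "\<forall>x\<in>#A. x \<ge> 1 \<Longrightarrow> \<forall>x\<in>#B. x \<ge> 1 \<Longrightarrow>
     prod_mset (image_mset P A) = prod_mset (image_mset P B) \<Longrightarrow> A = B"
proof (induct "size A + size B" arbitrary: A B rule: less_induct)
  case less
  show ?case
  proof (cases "A + B = {#}")
    case True then show ?thesis by simp
  next
    case False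
    define N where "N = Max (set_mset (A + B))"
    have fin: "finite (set_mset (A + B))" by simp
    have Nin: "N \<in># A + B" using False fin unfolding N_def
      by (metis Max_in set_mset_eq_empty_iff)
    have Nge: "\<forall>x\<in>#A + B. x \<le> N" using fin unfolding N_def by simp
    have N1: "N \<ge> 1" using Nin less.prems by auto
    have AB: "N \<in># A \<and> N \<in># B"
    proof (cases "N \<in># A")
      case True
      moreover have "N \<in># B"
        using mem_other[OF roots True N1, of B] less.prems Nge by auto
      ultimately show ?thesis by auto
    next
      case False
      then have "N \<in># B" using Nin by simp
      moreover have "N \<in># A"
        using mem_other[OF roots \<open>N \<in># B\<close> N1, of A] less.prems Nge by auto
      ultimately show ?thesis by auto
    qed
    then have NA: "N \<in># A" and NB: "N \<in># B" by auto
    obtain A' where A: "A = add_mset N A'" using NA by (metis mset_add)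
    obtain B' where B: "B = add_mset N B'" using NB by (metis mset_add)
    have "P N * prod_mset (image_mset P A') = P N * prod_mset (image_mset P B')"
      using less.prems(3) by (simp add: A B)
    then have "prod_mset (image_mset P A') = prod_mset (image_mset P B')"
      using nz[OF N1] by simp
    moreover have "size A' + size B' < size A + size B" by (simp add: A B)
    ultimately have "A' = B'" using less.hyps less.prems(1,2) by (simp add: A B)
    then show ?thesis by (simp add: A B)
  qed
qed



lemma complex_roots:
  fixes P :: "nat \<Rightarrow> complex poly"
  assumes id: "\<And>m a. m \<ge> 1 \<Longrightarrow> a \<noteq> 0 \<Longrightarrow> (a - 1/a) * poly (P m) (a + 1/a) = a^(m+1) - (1/a)^(m+1)"
    and N: "N \<ge> 1"
  shows "\<exists>\<alpha>. poly (P N) \<alpha> = 0 \<and> (\<forall>m. 1 \<le> m \<longrightarrow> m < N \<longrightarrow> poly (P m) \<alpha> \<noteq> 0)"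
proof -
  define z where "z = cis (pi / real (N+1))"
  have z0: "z \<noteq> 0" by (simp add: z_def)
  have zp: "z^k * z^k = cis (2 * pi * real k / real (N+1))" for k
  proof -
    have "z^k * z^k = z^(2*k)" by (simp add: power_add[symmetric] mult_2)
    also have "\<dots> = cis (real (2*k) * (pi / real (N+1)))" by (simp add: z_def Complex.DeMoivre)
    also have "real (2*k) * (pi / real (N+1)) = 2 * pi * real k / real (N+1)" by simp
    finally show ?thesis .
  qed
  have diff0: "z^k - (1/z)^k = 0 \<longleftrightarrow> z^k * z^k = 1" for k
    using z0 by (simp add: power_one_over field_simps)
  have zz: "z - 1/z \<noteq> 0"
    using diff0[of 1] zp[of 1] cis_ne1[of 1 "N+1"] N by simp
  show ?thesis
  proof (intro exI conjI allI impI)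
    have "(z - 1/z) * poly (P N) (z + 1/z) = 0"
      using id[OF N z0] diff0[of "N+1"] zp[of "N+1"] by simp
    then show "poly (P N) (z + 1/z) = 0" using zz by simp
  next
    fix m assume m: "1 \<le> m" "m < N"
    have "(z - 1/z) * poly (P m) (z + 1/z) \<noteq> 0"
      using id[OF m(1) z0] diff0[of "m+1"] zp[of "m+1"] cis_ne1[of "m+1" "N+1"] m by simp
    then show "poly (P m) (z + 1/z) \<noteq> 0" by simp
  qed
qed



lemma g_inj: "inj_on (\<lambda>j::nat. (of_nat j :: 'a::field_char_0) + 1 / of_nat j) {2..}"
proof (rule inj_onI)
  fix i j :: nat assume i: "i \<in> {2..}" and j: "j \<in> {2..}"
  assume eq: "(of_nat i :: 'a) + 1 / of_nat i = of_nat j + 1 / of_nat j"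
  have i0: "(of_nat i :: 'a) \<noteq> 0" and j0: "(of_nat j :: 'a) \<noteq> 0" using i j by auto
  have "(of_nat i - of_nat j) * (of_nat i * of_nat j - 1) = (0::'a)"
    using eq i0 j0 by (simp add: field_simps)
  moreover have "(of_nat i * of_nat j :: 'a) \<noteq> 1"
  proof
    assume "(of_nat i * of_nat j :: 'a) = 1"
    then have "of_nat (i * j) = (of_nat 1 :: 'a)" by simp
    then have "i * j = 1" by (simp only: of_nat_eq_iff)
    then show False using i j by simp
  qed
  ultimately show "i = j" by simp
qed

lemma T_eq_U:
  fixes T :: "nat \<Rightarrow> int poly"
  assumes T_trace: "\<And>n (s::'a::field_char_0^2^2). n \<ge> 1 \<Longrightarrow> s \<in> SL2 \<Longrightarrow>
                    sym_pow_trace n s = poly (map_poly of_int (T n)) (trace s)"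
    and n: "n \<ge> 1"
  shows "T n = U n"
proof -
  define D :: "'a poly" where "D = map_poly of_int (T n) - map_poly of_int (U n)"
  define g :: "nat \<Rightarrow> 'a" where "g = (\<lambda>j. of_nat j + 1 / of_nat j)"
  have root: "poly D (g j) = 0" if j: "j \<ge> 2" for j
  proof -
    define a :: 'a where "a = of_nat j"
    have a0: "a \<noteq> 0" using j by (simp add: a_def)
    have a1: "a - 1/a \<noteq> 0"
    proof
      assume "a - 1/a = 0"
      then have "a * a = 1" using a0 by (simp add: field_simps)
      then have "of_nat (j * j) = (of_nat 1 :: 'a)" by (simp add: a_def)
      then have "j * j = 1" by (simp only: of_nat_eq_iff)
      then show False using j by simp
    qed
    have "poly (map_poly of_int (T n)) (a + 1/a) = sym_pow_trace n (Dg a)"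
      using T_trace[OF n Dg_SL2[OF a0]] by (simp add: Dg_trace)
    also have "\<dots> = (\<Sum>k\<le>n. a^k * (1/a)^(n-k))" by (rule Dg_sym)
    finally have "(a - 1/a) * poly (map_poly of_int (T n)) (a + 1/a)
        = (a - 1/a) * poly (map_poly of_int (U n)) (a + 1/a)"
      using geom_sum[OF a0, of n] U_eval[OF a0, of n] by simp
    then have "poly (map_poly of_int (T n)) (a + 1/a) = poly (map_poly of_int (U n)) (a + 1/a)"
      using a1 by simp
    then show ?thesis by (simp add: D_def g_def a_def)
  qed
  have "D = 0"
  proof (rule ccontr)
    assume "D \<noteq> 0"
    then have "finite {x. poly D x = 0}" by (rule poly_roots_finite)
    moreover have "g ` {2..} \<subseteq> {x. poly D x = 0}" using root by auto
    ultimately have "finite (g ` {2..})" by (rule finite_subset[rotated])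
    then have "finite ({2..} :: nat set)"
      using g_inj unfolding g_def by (metis finite_imageD)
    then show False using infinite_Ici[of "2::nat"] by simp
  qed
  then have "map_poly (of_int :: int \<Rightarrow> 'a) (T n) = map_poly of_int (U n)" by (simp add: D_def)
  then show ?thesis by (rule mpi_inj)
qed


lemma poly_prod_list_map: "poly (prod_list (map f xs)) x = prod_list (map (\<lambda>y. poly (f y) x) xs)"
  by (induct xs) simp_all

theorem lemma4p4:
  fixes T :: "nat \<Rightarrow> int poly"
    and \<Sigma> :: "('a::field_char_0^2^2) set"
    and ns ms :: "nat list"
  assumes T_deg: "\<And>n. n \<ge> 1 \<Longrightarrow> degree (T n) = n"
    and T_trace: "\<And>n (s::'a^2^2). n \<ge> 1 \<Longrightarrow> s \<in> SL2 \<Longrightarrow>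
                    sym_pow_trace n s = poly (map_poly of_int (T n)) (trace s)"
    and ns_pos: "\<forall>n\<in>set ns. n \<ge> 1"
    and ms_pos: "\<forall>m\<in>set ms. m \<ge> 1"
    and \<Sigma>_sub: "\<Sigma> \<subseteq> SL2"
    and \<Sigma>_inf: "infinite \<Sigma>"
    and \<Sigma>_inj: "inj_on trace \<Sigma>"
    and prod_eq: "\<forall>s\<in>\<Sigma>. (\<Prod>n\<leftarrow>ns. poly (map_poly of_int (T n)) (trace s))
                        = (\<Prod>m\<leftarrow>ms. poly (map_poly of_int (T m)) (trace s))"
  shows "length ns = length ms \<and> mset ns = mset ms"
proof -
  have TU: "T n = U n" if "n \<ge> 1" for n
    using T_eq_U[OF T_trace that] .
  define PN where "PN = prod_list (map T ns)"
  define PM where "PM = prod_list (map T ms)"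
  have pe: "poly (map_poly (of_int :: int \<Rightarrow> 'a) PN) t = poly (map_poly of_int PM) t"
    if "t \<in> trace ` \<Sigma>" for t
    using prod_eq that
    by (auto simp: PN_def PM_def mpi_prod_list poly_prod_list_map o_def)
  have "map_poly (of_int :: int \<Rightarrow> 'a) PN - map_poly of_int PM = 0"
  proof (rule ccontr)
    assume "map_poly (of_int :: int \<Rightarrow> 'a) PN - map_poly of_int PM \<noteq> 0"
    then have "finite {x. poly (map_poly (of_int :: int \<Rightarrow> 'a) PN - map_poly of_int PM) x = 0}"
      by (rule poly_roots_finite)
    moreover have "trace ` \<Sigma> \<subseteq> {x. poly (map_poly (of_int :: int \<Rightarrow> 'a) PN - map_poly of_int PM) x = 0}"
      using pe by auto
    ultimately have "finite (trace ` \<Sigma>)" by (rule finite_subset[rotated])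
    then show False using \<Sigma>_inf \<Sigma>_inj finite_image_iff by blast
  qed
  then have "PN = PM" by (intro mpi_inj[where 'a='a]) simp
  define P :: "nat \<Rightarrow> complex poly" where "P = (\<lambda>n. map_poly of_int (T n))"
  have prodC: "prod_mset (image_mset P (mset ns)) = prod_mset (image_mset P (mset ms))"
  proof -
    have "map_poly (of_int :: int \<Rightarrow> complex) PN = map_poly of_int PM" using \<open>PN = PM\<close> by simp
    then show ?thesis
      by (simp add: PN_def PM_def mpi_prod_list P_def prod_mset_prod_list o_def flip: mset_map)
  qed
  have idP: "(a - 1/a) * poly (P m) (a + 1/a) = a^(m+1) - (1/a)^(m+1)"
    if "m \<ge> 1" "a \<noteq> 0" for m a
    using U_eval[OF that(2), of m] TU[OF that(1)] by (simp add: P_def)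
  have roots: "\<exists>\<alpha>. poly (P N) \<alpha> = 0 \<and> (\<forall>m. 1 \<le> m \<longrightarrow> m < N \<longrightarrow> poly (P m) \<alpha> \<noteq> 0)"
    if "N \<ge> 1" for N
    using complex_roots[OF idP that] by blast
  have nz: "P N \<noteq> 0" if "N \<ge> 1" for N
  proof
    assume "P N = 0"
    obtain \<alpha> where "\<forall>m. 1 \<le> m \<longrightarrow> m < N + 1 \<longrightarrow> poly (P m) \<alpha> \<noteq> 0"
      using roots[of "N+1"] by auto
    then have "poly (P N) \<alpha> \<noteq> 0" using that by simp
    then show False using \<open>P N = 0\<close> by simp
  qed
  have "mset ns = mset ms"
    using mset_eq_from_prod[of P, OF roots nz, of "mset ns" "mset ms"] ns_pos ms_pos prodC
    by auto
  moreover then have "length ns = length ms" by (metis size_mset)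
  ultimately show ?thesis by simp
qed

end
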